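(* Let $G$ be a finite group, with cardinality $|G|$, acting linearly and isometrically on $\mathbb{R}^n$. Let $X\sim\mathcal{N}(t_0,s^2\,\mathrm{Id}_{\mathbb{R}^n})$ with $s>0$ and let $m_\star$ be a global minimiser of $F$. Then $$d_Q([t_0],[m_\star])\le s\sqrt{8\log|G|}.$$
   Context: The action is linear and isometric: each $x\mapsto g\cdot x$ is linear with $\|g\cdot x\|=\|x\|$ (Euclidean norm). $[m]=\{g\cdot m:g\in G\}$, $d_Q([a],[b])=\min_{g\in G}\|g\cdot a-b\|$, and $F(m)=\mathbb{E}\big(\min_{g\in G}\|g\cdot X-m\|^2\big)$. *)

theory Defs
  imports "HOL-Probability.Probability" "HOL-Algebra.Group"
begin

definition gaussian_measure :: "real^'n \<Rightarrow> real \<Rightarrow> (real^'n) measure" where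
  "gaussian_measure t0 s = density lborel
     (\<lambda>x. ennreal ((2 * pi * s\<^sup>2) powr (- real CARD('n) / 2)
                    * exp (- (norm (x - t0))\<^sup>2 / (2 * s\<^sup>2))))"

definition linear_isometric_action ::
  "('g, 'b) monoid_scheme \<Rightarrow> ('g \<Rightarrow> real^'n \<Rightarrow> real^'n) \<Rightarrow> bool" where
  "linear_isometric_action G act \<longleftrightarrow>
     (\<forall>g\<in>carrier G. linear (act g) \<and> (\<forall>x. norm (act g x) = norm x)) \<and>
     act \<one>\<^bsub>G\<^esub> = id \<and>
     (\<forall>g\<in>carrier G. \<forall>h\<in>carrier G. act (g \<otimes>\<^bsub>G\<^esub> h) = act g \<circ> act h)"

definition dQ :: "('g, 'b) monoid_scheme \<Rightarrow> ('g \<Rightarrow> real^'n \<Rightarrow> real^'n)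
                  \<Rightarrow> real^'n \<Rightarrow> real^'n \<Rightarrow> real" where
  "dQ G act a b = Min ((\<lambda>g. norm (act g a - b)) ` carrier G)"

definition Ffun :: "'a measure \<Rightarrow> ('a \<Rightarrow> real^'n) \<Rightarrow> ('g, 'b) monoid_scheme
                    \<Rightarrow> ('g \<Rightarrow> real^'n \<Rightarrow> real^'n) \<Rightarrow> real^'n \<Rightarrow> real" where
  "Ffun M X G act m = (\<integral>\<omega>. Min ((\<lambda>g. (norm (act g (X \<omega>) - m))\<^sup>2) ` carrier G) \<partial>M)"

end

theory Submission
  imports Defs
begin


definition gdens :: "real^'n \<Rightarrow> real \<Rightarrow> real^'n \<Rightarrow> real" where
  "gdens t0 s x = (2 * pi * s\<^sup>2) powr (- real CARD('n) / 2) * exp (- (norm (x - t0))\<^sup>2 / (2 * s\<^sup>2))"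

lemma gdens_meas[measurable]: "gdens t0 s \<in> borel_measurable borel"
  unfolding gdens_def by measurable

lemma gdens_nonneg: "0 \<le> gdens t0 s x"
  unfolding gdens_def by simp

lemma gaussian_measure_eq: "gaussian_measure t0 s = density lborel (\<lambda>x. ennreal (gdens t0 s x))"
  unfolding gaussian_measure_def gdens_def ..

lemma gauss_nn:
  fixes X :: "'a \<Rightarrow> real^'n"
  assumes Xm: "X \<in> borel_measurable M"
    and D: "distr M lborel X = gaussian_measure t0 s"
    and f: "f \<in> borel_measurable borel"
  shows "(\<integral>\<^sup>+\<omega>. f (X \<omega>) \<partial>M) = (\<integral>\<^sup>+x. ennreal (gdens t0 s x) * f x \<partial>lborel)"
proof -
  have Xl: "X \<in> measurable M lborel" using Xm by simp
  have "(\<integral>\<^sup>+\<omega>. f (X \<omega>) \<partial>M) = integral\<^sup>N (distr M lborel X) f"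
    by (rule nn_integral_distr[symmetric]) (use Xl f in auto)
  also have "\<dots> = integral\<^sup>N (density lborel (\<lambda>x. ennreal (gdens t0 s x))) f"
    using D gaussian_measure_eq by metis
  also have "\<dots> = (\<integral>\<^sup>+x. ennreal (gdens t0 s x) * f x \<partial>lborel)"
    by (rule nn_integral_density) (use f in auto)
  finally show ?thesis .
qed

lemma gauss_one:
  fixes X :: "'a \<Rightarrow> real^'n"
  assumes P: "prob_space M" and Xm: "X \<in> borel_measurable M"
    and D: "distr M lborel X = gaussian_measure t0 s"
  shows "(\<integral>\<^sup>+x. ennreal (gdens t0 s x) \<partial>lborel) = 1"
proof -
  have "(\<integral>\<^sup>+\<omega>. (\<lambda>_. 1) (X \<omega>) \<partial>M) = (\<integral>\<^sup>+x. ennreal (gdens t0 s x) * (\<lambda>_. 1) x \<partial>lborel)"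
    by (rule gauss_nn[OF Xm D]) simp
  moreover have "(\<integral>\<^sup>+\<omega>. (\<lambda>_. 1) (X \<omega>) \<partial>M) = 1"
    using P by (simp add: prob_space.emeasure_space_1)
  ultimately show ?thesis by simp
qed

lemma lborel_transl:
  fixes c :: "'a::euclidean_space"
  assumes g: "g \<in> borel_measurable borel"
  shows "(\<integral>\<^sup>+x. g (x + c) \<partial>lborel) = (\<integral>\<^sup>+x. g x \<partial>lborel)"
proof -
  have "(\<integral>\<^sup>+x. g x \<partial>lborel) = (\<integral>\<^sup>+x. g x \<partial>(distr lborel borel ((+) c)))"
    by (simp add: lborel_distr_plus)
  also have "\<dots> = (\<integral>\<^sup>+x. g (c + x) \<partial>lborel)"
    by (rule nn_integral_distr) (use g in auto)
  finally show ?thesis by (simp add: add.commute)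
qed

lemma gdens_shift:
  assumes "s > 0"
  shows "gdens t0 s x * exp (w \<bullet> (x - t0)) = exp (s\<^sup>2 * (norm w)\<^sup>2 / 2) * gdens t0 s (x + (- (s\<^sup>2 *\<^sub>R w)))"
proof -
  define z where "z = x - t0"
  have e: "x + (- (s\<^sup>2 *\<^sub>R w)) - t0 = z - s\<^sup>2 *\<^sub>R w" unfolding z_def by (simp add: algebra_simps)
  have n: "(norm (z - s\<^sup>2 *\<^sub>R w))\<^sup>2 = (norm z)\<^sup>2 - 2 * s\<^sup>2 * (w \<bullet> z) + s\<^sup>2 * s\<^sup>2 * (norm w)\<^sup>2"
    unfolding power2_norm_eq_inner by (simp add: inner_diff_left inner_diff_right inner_commute algebra_simps power2_eq_square)
  have "- (norm z)\<^sup>2 / (2 * s\<^sup>2) + w \<bullet> z = s\<^sup>2 * (norm w)\<^sup>2 / 2 + - (norm (z - s\<^sup>2 *\<^sub>R w))\<^sup>2 / (2 * s\<^sup>2)"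
    unfolding n using assms by (simp add: field_simps power2_eq_square)
  then show ?thesis
    unfolding gdens_def e z_def[symmetric] by (simp add: exp_add[symmetric] mult.assoc)
qed

lemma gauss_mgf_nn:
  fixes X :: "'a \<Rightarrow> real^'n"
  assumes P: "prob_space M" and Xm: "X \<in> borel_measurable M"
    and D: "distr M lborel X = gaussian_measure t0 s" and sp: "s > 0"
  shows "(\<integral>\<^sup>+\<omega>. ennreal (exp (w \<bullet> (X \<omega> - t0))) \<partial>M) = ennreal (exp (s\<^sup>2 * (norm w)\<^sup>2 / 2))"
proof -
  have "(\<integral>\<^sup>+\<omega>. ennreal (exp (w \<bullet> (X \<omega> - t0))) \<partial>M)
      = (\<integral>\<^sup>+x. ennreal (gdens t0 s x) * ennreal (exp (w \<bullet> (x - t0))) \<partial>lborel)"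
    by (rule gauss_nn[OF Xm D, where f = "\<lambda>x. ennreal (exp (w \<bullet> (x - t0)))"]) simp
  also have "\<dots> = (\<integral>\<^sup>+x. ennreal (exp (s\<^sup>2 * (norm w)\<^sup>2 / 2)) * ennreal (gdens t0 s (x + (- (s\<^sup>2 *\<^sub>R w)))) \<partial>lborel)"
    by (intro nn_integral_cong) (simp add: ennreal_mult'[symmetric] gdens_nonneg gdens_shift[OF sp])
  also have "\<dots> = ennreal (exp (s\<^sup>2 * (norm w)\<^sup>2 / 2)) * (\<integral>\<^sup>+x. ennreal (gdens t0 s (x + (- (s\<^sup>2 *\<^sub>R w)))) \<partial>lborel)"
    by (rule nn_integral_cmult) simp
  also have "(\<integral>\<^sup>+x. ennreal (gdens t0 s (x + (- (s\<^sup>2 *\<^sub>R w)))) \<partial>lborel) = (\<integral>\<^sup>+x. ennreal (gdens t0 s x) \<partial>lborel)"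
    by (rule lborel_transl[where g = "\<lambda>x. ennreal (gdens t0 s x)"]) simp
  also have "\<dots> = 1" by (rule gauss_one[OF P Xm D])
  finally show ?thesis by simp
qed

lemma gauss_mgf:
  fixes X :: "'a \<Rightarrow> real^'n"
  assumes P: "prob_space M" and Xm: "X \<in> borel_measurable M"
    and D: "distr M lborel X = gaussian_measure t0 s" and sp: "s > 0"
  shows "integrable M (\<lambda>\<omega>. exp (w \<bullet> (X \<omega> - t0)))"
    and "(\<integral>\<omega>. exp (w \<bullet> (X \<omega> - t0)) \<partial>M) = exp (s\<^sup>2 * (norm w)\<^sup>2 / 2)"
proof -
  have m: "(\<lambda>\<omega>. exp (w \<bullet> (X \<omega> - t0))) \<in> borel_measurable M" using Xm by measurable
  have h: "has_bochner_integral M (\<lambda>\<omega>. exp (w \<bullet> (X \<omega> - t0))) (exp (s\<^sup>2 * (norm w)\<^sup>2 / 2))"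
    by (rule has_bochner_integral_nn_integral[OF m]) (auto simp: gauss_mgf_nn[OF assms])
  then show "integrable M (\<lambda>\<omega>. exp (w \<bullet> (X \<omega> - t0)))"
    and "(\<integral>\<omega>. exp (w \<bullet> (X \<omega> - t0)) \<partial>M) = exp (s\<^sup>2 * (norm w)\<^sup>2 / 2)"
    by (auto simp: has_bochner_integral_iff)
qed

lemma sq_le_exp: "(x::real)\<^sup>2 \<le> 4 * (exp x + exp (- x))"
proof -
  have a: "1 + \<bar>x\<bar>/2 \<le> exp (\<bar>x\<bar>/2)" by (rule exp_ge_add_one_self)
  have "(1 + \<bar>x\<bar>/2)\<^sup>2 \<le> (exp (\<bar>x\<bar>/2))\<^sup>2"
    by (rule power_mono[OF a]) simp
  also have "(exp (\<bar>x\<bar>/2))\<^sup>2 = exp \<bar>x\<bar>" by (simp add: power2_eq_square exp_add[symmetric])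
  finally have b: "(1 + \<bar>x\<bar>/2)\<^sup>2 \<le> exp \<bar>x\<bar>" .
  have c: "x\<^sup>2 \<le> 4 * (1 + \<bar>x\<bar>/2)\<^sup>2"
    by (simp add: power2_eq_square algebra_simps)
  have d: "exp \<bar>x\<bar> \<le> exp x + exp (- x)"
    by (cases "x \<ge> 0") (auto simp: add_increasing add_increasing2)
  have "4 * (1 + \<bar>x\<bar>/2)\<^sup>2 \<le> 4 * (exp x + exp (- x))" using b d by simp
  then show ?thesis using c by (rule order_trans[rotated])
qed

lemma gauss_sq:
  fixes X :: "'a \<Rightarrow> real^'n"
  assumes P: "prob_space M" and Xm: "X \<in> borel_measurable M"
    and D: "distr M lborel X = gaussian_measure t0 s" and sp: "s > 0"
  shows "integrable M (\<lambda>\<omega>. (norm (X \<omega> - t0))\<^sup>2)"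
proof (rule Bochner_Integration.integrable_bound)
  show "integrable M (\<lambda>\<omega>. \<Sum>b\<in>Basis. 4 * (exp (b \<bullet> (X \<omega> - t0)) + exp ((- b) \<bullet> (X \<omega> - t0))))"
  proof (intro Bochner_Integration.integrable_sum)
    fix b :: "real^'n"
    show "integrable M (\<lambda>\<omega>. 4 * (exp (b \<bullet> (X \<omega> - t0)) + exp ((- b) \<bullet> (X \<omega> - t0))))"
      using gauss_mgf(1)[OF assms, of b] gauss_mgf(1)[OF assms, of "-b"] by simp
  qed
  show "(\<lambda>\<omega>. (norm (X \<omega> - t0))\<^sup>2) \<in> borel_measurable M" using Xm by measurable
  show "AE \<omega> in M. norm ((norm (X \<omega> - t0))\<^sup>2) \<le> norm (\<Sum>b\<in>Basis. 4 * (exp (b \<bullet> (X \<omega> - t0)) + exp ((- b) \<bullet> (X \<omega> - t0))))"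
  proof (intro AE_I2)
    fix \<omega>
    define y where "y = X \<omega> - t0"
    have "(norm y)\<^sup>2 = (\<Sum>b\<in>(Basis::(real^'n) set). (y \<bullet> b)\<^sup>2)"
      unfolding power2_norm_eq_inner by (subst euclidean_inner) (simp add: power2_eq_square)
    also have "\<dots> \<le> (\<Sum>b\<in>Basis. 4 * (exp (b \<bullet> y) + exp ((- b) \<bullet> y)))"
      by (intro sum_mono) (metis sq_le_exp inner_commute inner_minus_left)
    finally have "(norm y)\<^sup>2 \<le> (\<Sum>b\<in>Basis. 4 * (exp (b \<bullet> y) + exp ((- b) \<bullet> y)))" .
    moreover have "0 \<le> (\<Sum>b\<in>(Basis::(real^'n) set). 4 * (exp (b \<bullet> y) + exp ((- b) \<bullet> y)))"
      by (intro sum_nonneg) (simp add: add_nonneg_nonneg)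
    ultimately show "norm ((norm (X \<omega> - t0))\<^sup>2) \<le> norm (\<Sum>b\<in>Basis. 4 * (exp (b \<bullet> (X \<omega> - t0)) + exp ((- b) \<bullet> (X \<omega> - t0))))"
      unfolding y_def by simp
  qed
qed



lemma adj_norm_le:
  fixes f :: "real^'n \<Rightarrow> real^'n"
  assumes lin: "linear f" and iso: "\<And>x. norm (f x) = norm x"
  shows "norm (adjoint f v) \<le> norm v"
proof -
  define u where "u = adjoint f v"
  have "(norm u)\<^sup>2 = f u \<bullet> v"
    using adjoint_works[OF lin, of u v] unfolding u_def power2_norm_eq_inner by simp
  also have "\<dots> \<le> norm (f u) * norm v" by (rule norm_cauchy_schwarz)
  finally have "norm u * norm u \<le> norm u * norm v" using iso by (simp add: power2_eq_square)
  then have "norm u \<le> norm v"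
    by (cases "norm u = 0") (auto simp: mult_le_cancel_left)
  then show ?thesis unfolding u_def .
qed

lemma sq_tri: "(norm (a + b :: 'v::real_normed_vector))\<^sup>2 \<le> 2 * (norm a)\<^sup>2 + 2 * (norm b)\<^sup>2"
proof -
  have "(norm (a + b))\<^sup>2 \<le> (norm a + norm b)\<^sup>2"
    by (rule power_mono[OF norm_triangle_ineq]) simp
  moreover have "(norm a + norm b)\<^sup>2 + (norm a - norm b)\<^sup>2 = 2 * (norm a)\<^sup>2 + 2 * (norm b)\<^sup>2"
    by (simp add: power2_eq_square algebra_simps)
  moreover have "0 \<le> (norm a - norm b)\<^sup>2" by simp
  ultimately show ?thesis by linarith
qed

lemma nsq: "(norm (u + v :: 'v::real_inner))\<^sup>2 = (norm u)\<^sup>2 + 2 * (u \<bullet> v) + (norm v)\<^sup>2"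
  unfolding power2_norm_eq_inner by (simp add: inner_add_left inner_add_right inner_commute)

theorem mainTheorem6:
  fixes G :: "('g, 'b) monoid_scheme"
    and act :: "'g \<Rightarrow> real^'n \<Rightarrow> real^'n"
    and M :: "'a measure" and X :: "'a \<Rightarrow> real^'n"
    and t0 m_star :: "real^'n" and s :: real
  assumes "group G" and "finite (carrier G)"
    and "linear_isometric_action G act"
    and "prob_space M"
    and "X \<in> borel_measurable M"
    and "distr M lborel X = gaussian_measure t0 s"
    and "s > 0"
    and "\<forall>m. Ffun M X G act m_star \<le> Ffun M X G act m"
  shows "dQ G act t0 m_star \<le> s * sqrt (8 * ln (real (card (carrier G))))"
proof -
  have grp: "group G" and fin: "finite (carrier G)" and P: "prob_space M"
    and Xm: "X \<in> borel_measurable M" and Dst: "distr M lborel X = gaussian_measure t0 s"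
    and sp: "s > 0" and opt: "\<forall>m. Ffun M X G act m_star \<le> Ffun M X G act m"
    using assms by auto
  interpret prob_space M by (rule P)
  from assms(3) have lin: "\<And>g. g \<in> carrier G \<Longrightarrow> linear (act g)"
    and iso: "\<And>g x. g \<in> carrier G \<Longrightarrow> norm (act g x) = norm x"
    and one: "act \<one>\<^bsub>G\<^esub> = id"
    unfolding linear_isometric_action_def by auto
  have one_in: "\<one>\<^bsub>G\<^esub> \<in> carrier G" using grp by (simp add: group.is_monoid monoid.one_closed)
  have ne: "carrier G \<noteq> {}" using one_in by auto
  have Npos: "0 < real (card (carrier G))" using fin ne by (simp add: card_gt_0_iff)
  have actm: "act g \<in> borel_measurable borel" if g: "g \<in> carrier G" for g
  proof (rule borel_measurable_continuous_onI)
    show "continuous_on UNIV (act g)"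
      using linear_continuous_on_compose[OF continuous_on_id lin[OF g]] by simp
  qed
  define Y where "Y \<omega> = X \<omega> - t0" for \<omega>
  define Q where "Q m \<omega> = Min ((\<lambda>g. (norm (act g (X \<omega>) - m))\<^sup>2) ` carrier G)" for m \<omega>
  have Fq: "Ffun M X G act m = (\<integral>\<omega>. Q m \<omega> \<partial>M)" for m unfolding Ffun_def Q_def ..
  have Qm: "Q m \<in> borel_measurable M" for m
    unfolding Q_def
  proof (rule borel_measurable_Min[OF fin])
    fix g assume g: "g \<in> carrier G"
    note [measurable] = actm[OF g]
    show "(\<lambda>\<omega>. (norm (act g (X \<omega>) - m))\<^sup>2) \<in> borel_measurable M" using Xm by measurable
  qed
  have Ysq: "integrable M (\<lambda>\<omega>. (norm (Y \<omega>))\<^sup>2)"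
    unfolding Y_def by (rule gauss_sq[OF P Xm Dst sp])
  have Qle1: "Q m \<omega> \<le> (norm (X \<omega> - m))\<^sup>2" for m \<omega>
  proof -
    have "Q m \<omega> \<le> (norm (act \<one>\<^bsub>G\<^esub> (X \<omega>) - m))\<^sup>2"
      unfolding Q_def using fin one_in by (intro Min_le) auto
    then show ?thesis using one by simp
  qed
  have Qnn: "0 \<le> Q m \<omega>" for m \<omega>
  proof -
    have "Q m \<omega> \<in> (\<lambda>g. (norm (act g (X \<omega>) - m))\<^sup>2) ` carrier G"
      unfolding Q_def using fin ne by (intro Min_in) auto
    then show ?thesis by auto
  qed
  have Qint: "integrable M (Q m)" for m
  proof (rule Bochner_Integration.integrable_bound)
    show "integrable M (\<lambda>\<omega>. 2 * (norm (Y \<omega>))\<^sup>2 + 2 * (norm (t0 - m))\<^sup>2)"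
      using Ysq by simp
    show "Q m \<in> borel_measurable M" by (rule Qm)
    show "AE \<omega> in M. norm (Q m \<omega>) \<le> norm (2 * (norm (Y \<omega>))\<^sup>2 + 2 * (norm (t0 - m))\<^sup>2)"
    proof (rule AE_I2)
      fix \<omega>
      have "Q m \<omega> \<le> (norm (Y \<omega> + (t0 - m)))\<^sup>2" using Qle1[of m \<omega>] unfolding Y_def by simp
      also have "\<dots> \<le> 2 * (norm (Y \<omega>))\<^sup>2 + 2 * (norm (t0 - m))\<^sup>2" by (rule sq_tri)
      finally show "norm (Q m \<omega>) \<le> norm (2 * (norm (Y \<omega>))\<^sup>2 + 2 * (norm (t0 - m))\<^sup>2)"
        using Qnn[of m \<omega>] by simp
    qed
  qed
  have ident: "(norm (act g (X \<omega>) - m))\<^sup>2 = (norm (act g t0 - m))\<^sup>2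
      + 2 * (Y \<omega> \<bullet> adjoint (act g) (act g t0 - m)) + (norm (Y \<omega>))\<^sup>2"
    if g: "g \<in> carrier G" for g m \<omega>
  proof -
    have "X \<omega> = t0 + Y \<omega>" unfolding Y_def by simp
    then have a: "act g (X \<omega>) = act g t0 + act g (Y \<omega>)"
      using linear_add[OF lin[OF g]] by simp
    have "act g (X \<omega>) - m = (act g t0 - m) + act g (Y \<omega>)" using a by simp
    then have "(norm (act g (X \<omega>) - m))\<^sup>2 = (norm (act g t0 - m))\<^sup>2 + 2 * ((act g t0 - m) \<bullet> act g (Y \<omega>)) + (norm (act g (Y \<omega>)))\<^sup>2"
      by (simp only: nsq)
    moreover have "(act g t0 - m) \<bullet> act g (Y \<omega>) = Y \<omega> \<bullet> adjoint (act g) (act g t0 - m)"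
      using adjoint_works[OF lin[OF g], of "Y \<omega>" "act g t0 - m"] by (simp add: inner_commute)
    ultimately show ?thesis using iso[OF g] by simp
  qed
  define d where "d = dQ G act t0 m_star"
  define DD where "DD g = norm (act g t0 - m_star)" for g
  define w where "w g = adjoint (act g) (act g t0 - m_star)" for g
  define lam where "lam = 1 / (4 * s\<^sup>2)"
  define N where "N = real (card (carrier G))"
  define c where "c = ln N - d\<^sup>2 / (8 * s\<^sup>2)"
  define a where "a g = exp (- lam * (DD g)\<^sup>2)" for g
  define b where "b g = (- (2 * lam)) *\<^sub>R w g" for g
  have lam_pos: "0 < lam" unfolding lam_def using sp by simp
  have d_le: "d \<le> DD g" if "g \<in> carrier G" for g
    unfolding d_def dQ_def DD_def using fin that by (intro Min_le) auto
  have d_nn: "0 \<le> d"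
  proof -
    have "d \<in> (\<lambda>g. norm (act g t0 - m_star)) ` carrier G"
      unfolding d_def dQ_def using fin ne by (intro Min_in) auto
    then show ?thesis by auto
  qed
  have wle: "norm (w g) \<le> DD g" if g: "g \<in> carrier G" for g
    unfolding w_def DD_def by (rule adj_norm_le[OF lin[OF g] iso[OF g]])
  define R where "R \<omega> = exp (- c) * (\<Sum>g\<in>carrier G. a g * exp (b g \<bullet> Y \<omega>)) - 1 + c" for \<omega>
  have pw: "lam * (Q t0 \<omega> - Q m_star \<omega>) \<le> R \<omega>" for \<omega>
  proof -
    obtain g0 where g0: "g0 \<in> carrier G" and Qg0: "Q m_star \<omega> = (norm (act g0 (X \<omega>) - m_star))\<^sup>2"
    proof -
      have "Q m_star \<omega> \<in> (\<lambda>g. (norm (act g (X \<omega>) - m_star))\<^sup>2) ` carrier G"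
        unfolding Q_def using fin ne by (intro Min_in) auto
      then show ?thesis using that by auto
    qed
    have Qt0: "Q t0 \<omega> \<le> (norm (Y \<omega>))\<^sup>2" using Qle1[of t0 \<omega>] unfolding Y_def .
    define z where "z = - lam * (DD g0)\<^sup>2 + b g0 \<bullet> Y \<omega>"
    have zeq: "lam * ((norm (Y \<omega>))\<^sup>2 - Q m_star \<omega>) = z"
      unfolding Qg0 ident[OF g0] z_def b_def w_def DD_def
      by (simp add: inner_commute algebra_simps)
    have "lam * (Q t0 \<omega> - Q m_star \<omega>) \<le> lam * ((norm (Y \<omega>))\<^sup>2 - Q m_star \<omega>)"
      using Qt0 lam_pos by (intro mult_left_mono) auto
    also have "\<dots> = z" by (rule zeq)
    also have "z \<le> exp (z - c) - 1 + c" using exp_ge_add_one_self[of "z - c"] by linarith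
    also have "exp (z - c) = exp (- c) * (a g0 * exp (b g0 \<bullet> Y \<omega>))"
      unfolding z_def a_def by (simp add: exp_add[symmetric] exp_diff)
    also have "\<dots> \<le> exp (- c) * (\<Sum>g\<in>carrier G. a g * exp (b g \<bullet> Y \<omega>))"
      by (intro mult_left_mono member_le_sum fin g0) (auto simp: a_def)
    finally show ?thesis unfolding R_def by simp
  qed
  have bint: "integrable M (\<lambda>\<omega>. exp (b g \<bullet> Y \<omega>))" and bval: "(\<integral>\<omega>. exp (b g \<bullet> Y \<omega>) \<partial>M) = exp (s\<^sup>2 * (norm (b g))\<^sup>2 / 2)" for g
    unfolding Y_def by (rule gauss_mgf[OF P Xm Dst sp])+
  have sint: "integrable M (\<lambda>\<omega>. \<Sum>g\<in>carrier G. a g * exp (b g \<bullet> Y \<omega>))"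
    by (intro Bochner_Integration.integrable_sum integrable_mult_right bint)
  have Rint: "integrable M R" unfolding R_def using sint by simp
  have Rval: "(\<integral>\<omega>. R \<omega> \<partial>M) = exp (- c) * (\<Sum>g\<in>carrier G. a g * exp (s\<^sup>2 * (norm (b g))\<^sup>2 / 2)) - 1 + c"
  proof -
    have "(\<integral>\<omega>. (\<Sum>g\<in>carrier G. a g * exp (b g \<bullet> Y \<omega>)) \<partial>M) = (\<Sum>g\<in>carrier G. a g * exp (s\<^sup>2 * (norm (b g))\<^sup>2 / 2))"
      by (subst Bochner_Integration.integral_sum) (auto intro!: bint simp: bval)
    then show ?thesis unfolding R_def using sint by (simp add: prob_space)
  qed
  have term_le: "a g * exp (s\<^sup>2 * (norm (b g))\<^sup>2 / 2) \<le> exp (- d\<^sup>2 / (8 * s\<^sup>2))" if g: "g \<in> carrier G" for g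
  proof -
    have nb: "norm (b g) \<le> 2 * lam * DD g"
      unfolding b_def using wle[OF g] lam_pos by simp
    have "(norm (b g))\<^sup>2 \<le> (2 * lam * DD g)\<^sup>2"
      by (rule power_mono[OF nb]) simp
    then have e1: "s\<^sup>2 * (norm (b g))\<^sup>2 / 2 \<le> s\<^sup>2 * (2 * lam * DD g)\<^sup>2 / 2"
      by (simp add: divide_right_mono mult_left_mono)
    have e2: "- lam * (DD g)\<^sup>2 + s\<^sup>2 * (2 * lam * DD g)\<^sup>2 / 2 = - (DD g)\<^sup>2 / (8 * s\<^sup>2)"
      unfolding lam_def using sp by (simp add: field_simps power2_eq_square)
    have "d\<^sup>2 \<le> (DD g)\<^sup>2" by (rule power_mono[OF d_le[OF g] d_nn])
    then have e3: "- (DD g)\<^sup>2 / (8 * s\<^sup>2) \<le> - d\<^sup>2 / (8 * s\<^sup>2)"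
      using sp by (simp add: divide_right_mono)
    have "a g * exp (s\<^sup>2 * (norm (b g))\<^sup>2 / 2) = exp (- lam * (DD g)\<^sup>2 + s\<^sup>2 * (norm (b g))\<^sup>2 / 2)"
      unfolding a_def by (simp add: exp_add[symmetric])
    also have "\<dots> \<le> exp (- d\<^sup>2 / (8 * s\<^sup>2))" using e1 e2 e3 by simp
    finally show ?thesis .
  qed
  have sum_le: "(\<Sum>g\<in>carrier G. a g * exp (s\<^sup>2 * (norm (b g))\<^sup>2 / 2)) \<le> N * exp (- d\<^sup>2 / (8 * s\<^sup>2))"
    using sum_mono[OF term_le] unfolding N_def by simp
  have ec: "exp (- c) * (N * exp (- d\<^sup>2 / (8 * s\<^sup>2))) = 1"
    unfolding c_def N_def using Npos by (simp add: exp_add[symmetric] exp_diff)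
  have "lam * (Ffun M X G act t0 - Ffun M X G act m_star) = (\<integral>\<omega>. lam * (Q t0 \<omega> - Q m_star \<omega>) \<partial>M)"
    unfolding Fq using Qint by simp
  also have "\<dots> \<le> (\<integral>\<omega>. R \<omega> \<partial>M)"
    by (rule integral_mono) (use Qint Rint pw in auto)
  also have "\<dots> \<le> c"
  proof -
    have "exp (- c) * (\<Sum>g\<in>carrier G. a g * exp (s\<^sup>2 * (norm (b g))\<^sup>2 / 2)) \<le> exp (- c) * (N * exp (- d\<^sup>2 / (8 * s\<^sup>2)))"
      by (intro mult_left_mono sum_le) simp
    then show ?thesis unfolding Rval ec by simp
  qed
  finally have lc: "lam * (Ffun M X G act t0 - Ffun M X G act m_star) \<le> c" .
  have "0 \<le> lam * (Ffun M X G act t0 - Ffun M X G act m_star)"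
    using opt lam_pos by simp
  then have "0 \<le> c" using lc by linarith
  then have "d\<^sup>2 / (8 * s\<^sup>2) \<le> ln N" unfolding c_def by simp
  then have "d\<^sup>2 \<le> s\<^sup>2 * (8 * ln N)" using sp by (simp add: field_simps)
  then have "d \<le> sqrt (s\<^sup>2 * (8 * ln N))" by (rule real_le_rsqrt)
  also have "\<dots> = s * sqrt (8 * ln N)" using sp by (simp add: real_sqrt_mult)
  finally show ?thesis unfolding d_def N_def .
qed

end
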